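(* Let $A$ be a binary $n\times m$ matrix that has no two identical rows, and suppose $A$ has a binary base $\{u_1,\dots,u_d\}$ that is disjoint in rows. Then $\{u_1,\dots,u_d\}$ spans (in the binary sense) every other binary base of $A$.
   Context: A set $X$ of $\{0,1\}$-vectors spans a vector $y$ (binary sense) if $y=\sum_{x\in X}c_xx$ with $c_x\in\{0,1\}$ and ordinary addition; it spans a set $Y$ if it spans each vector of $Y$. A binary base of $A$ is a set of $\{0,1\}$ column vectors of length $n$ spanning every column of $A$, of minimum cardinality among such spanning sets. A base is disjoint in rows if no two distinct vectors of it have a $1$ in the same coordinate. *)

theory Defs
  imports Main
begin

text \<open>A {0,1}-vector of length n is modelled as a function nat => nat with
  values in {0,1} on indices i < n and value 0 at indices i >= n.
  A binary n x m matrix is a function nat => nat => nat (row, column) with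
  entries in {0,1} for i < n, j < m.\<close>

definition binvec :: "nat \<Rightarrow> (nat \<Rightarrow> nat) \<Rightarrow> bool" where
  "binvec n v \<longleftrightarrow> (\<forall>i<n. v i \<in> {0,1}) \<and> (\<forall>i\<ge>n. v i = 0)"

definition binary_matrix :: "nat \<Rightarrow> nat \<Rightarrow> (nat \<Rightarrow> nat \<Rightarrow> nat) \<Rightarrow> bool" where
  "binary_matrix n m A \<longleftrightarrow> (\<forall>i<n. \<forall>j<m. A i j \<in> {0,1})"

definition distinct_rows :: "nat \<Rightarrow> nat \<Rightarrow> (nat \<Rightarrow> nat \<Rightarrow> nat) \<Rightarrow> bool" where
  "distinct_rows n m A \<longleftrightarrow> (\<forall>i<n. \<forall>i'<n. i \<noteq> i' \<longrightarrow> (\<exists>j<m. A i j \<noteq> A i' j))"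

definition col :: "nat \<Rightarrow> (nat \<Rightarrow> nat \<Rightarrow> nat) \<Rightarrow> nat \<Rightarrow> (nat \<Rightarrow> nat)" where
  "col n A j = (\<lambda>i. if i < n then A i j else 0)"

definition cols :: "nat \<Rightarrow> nat \<Rightarrow> (nat \<Rightarrow> nat \<Rightarrow> nat) \<Rightarrow> (nat \<Rightarrow> nat) set" where
  "cols n m A = col n A ` {..<m}"

text \<open>Binary span: y is a sum (ordinary addition) of a subfamily of X,
  i.e. y = sum of c_x x with c_x in {0,1}.\<close>
definition bspans :: "(nat \<Rightarrow> nat) set \<Rightarrow> (nat \<Rightarrow> nat) \<Rightarrow> bool" where
  "bspans X y \<longleftrightarrow> (\<exists>S\<subseteq>X. y = (\<lambda>i. \<Sum>x\<in>S. x i))"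

definition bspans_set :: "(nat \<Rightarrow> nat) set \<Rightarrow> (nat \<Rightarrow> nat) set \<Rightarrow> bool" where
  "bspans_set X Y \<longleftrightarrow> (\<forall>y\<in>Y. bspans X y)"

definition binary_spanning :: "nat \<Rightarrow> nat \<Rightarrow> (nat \<Rightarrow> nat \<Rightarrow> nat) \<Rightarrow> (nat \<Rightarrow> nat) set \<Rightarrow> bool" where
  "binary_spanning n m A X \<longleftrightarrow> finite X \<and> (\<forall>x\<in>X. binvec n x) \<and> bspans_set X (cols n m A)"

definition binary_base :: "nat \<Rightarrow> nat \<Rightarrow> (nat \<Rightarrow> nat \<Rightarrow> nat) \<Rightarrow> (nat \<Rightarrow> nat) set \<Rightarrow> bool" where
  "binary_base n m A B \<longleftrightarrow> binary_spanning n m A B \<and>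
     (\<forall>X. binary_spanning n m A X \<longrightarrow> card B \<le> card X)"

definition disjoint_in_rows :: "(nat \<Rightarrow> nat) set \<Rightarrow> bool" where
  "disjoint_in_rows B \<longleftrightarrow> (\<forall>u\<in>B. \<forall>v\<in>B. u \<noteq> v \<longrightarrow> (\<forall>i. \<not> (u i = 1 \<and> v i = 1)))"

end

theory Submission
  imports Defs
begin

lemma sum_at_row:
  assumes fin: "finite U" and bv: "\<forall>x\<in>U. binvec n x" and dj: "disjoint_in_rows U"
    and S: "S \<subseteq> U" and u: "u \<in> U" and ui: "u i = 1"
  shows "(\<Sum>x\<in>S. x i) = (if u \<in> S then 1 else 0)"
proof -
  have iN: "i < n" using bv u ui unfolding binvec_def by (metis not_le zero_neq_one)
  have "(\<Sum>x\<in>S. x i) = (\<Sum>x\<in>S. if x = u then 1 else 0)"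
  proof (rule sum.cong)
    fix x assume x: "x \<in> S"
    show "x i = (if x = u then 1 else 0)"
    proof (cases "x = u")
      case True then show ?thesis using ui by simp
    next
      case False
      have "x \<in> U" using x S by auto
      then have "x i \<in> {0,1}" using bv iN unfolding binvec_def by blast
      moreover have "x i \<noteq> 1" using dj False \<open>x \<in> U\<close> u ui unfolding disjoint_in_rows_def by blast
      ultimately show ?thesis using False by auto
    qed
  qed simp
  also have "\<dots> = (if u \<in> S then 1 else 0)"
  proof -
    have "finite S" using fin S finite_subset by auto
    then show ?thesis using sum.delta[of S u "\<lambda>_. 1::nat"] by (simp add: eq_commute)
  qed
  finally show ?thesis .
qed

theorem mainTheorem12:
  fixes n m :: nat and A :: "nat \<Rightarrow> nat \<Rightarrow> nat" and U B :: "(nat \<Rightarrow> nat) set"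
  assumes "binary_matrix n m A"
    and "distinct_rows n m A"
    and "binary_base n m A U"
    and "disjoint_in_rows U"
    and "binary_base n m A B"
  shows "bspans_set U B"
proof -
  have finU: "finite U" and bvU: "\<forall>x\<in>U. binvec n x" and spU: "bspans_set U (cols n m A)"
    using assms(3) unfolding binary_base_def binary_spanning_def by auto
  have finB: "finite B" and bvB: "\<forall>x\<in>B. binvec n x" and spB: "bspans_set B (cols n m A)"
    and minB: "\<And>X. binary_spanning n m A X \<Longrightarrow> card B \<le> card X"
    using assms(5) unfolding binary_base_def binary_spanning_def by auto
  note dj = assms(4)
  have bv_lt: "\<And>v i. binvec n v \<Longrightarrow> v i = 1 \<Longrightarrow> i < n"
    unfolding binvec_def by (metis not_le zero_neq_one)
  have unit: "\<And>u i i'. u \<in> U \<Longrightarrow> u i = 1 \<Longrightarrow> u i' = 1 \<Longrightarrow> i = i'"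
  proof (rule ccontr)
    fix u i i' assume u: "u \<in> U" and ui: "u i = 1" and ui': "u i' = 1" and ne: "i \<noteq> i'"
    have iN: "i < n" and iN': "i' < n" using bv_lt bvU u ui ui' by auto
    have "\<forall>j<m. A i j = A i' j"
    proof (intro allI impI)
      fix j assume j: "j < m"
      have "col n A j \<in> cols n m A" unfolding cols_def using j by auto
      then obtain S where S: "S \<subseteq> U" and eq: "col n A j = (\<lambda>i. \<Sum>x\<in>S. x i)"
        using spU unfolding bspans_set_def bspans_def by blast
      have "A i j = (\<Sum>x\<in>S. x i)" using fun_cong[OF eq, of i] iN by (simp add: col_def)
      also have "\<dots> = (if u \<in> S then 1 else 0)" by (rule sum_at_row[OF finU bvU dj S u ui])
      also have "\<dots> = (\<Sum>x\<in>S. x i')" by (rule sum_at_row[OF finU bvU dj S u ui', symmetric])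
      also have "\<dots> = A i' j" using fun_cong[OF eq, of i'] iN' by (simp add: col_def)
      finally show "A i j = A i' j" .
    qed
    then show False using assms(2) iN iN' ne unfolding distinct_rows_def by blast
  qed
  have cover: "\<And>b i. b \<in> B \<Longrightarrow> b i = 1 \<Longrightarrow> \<exists>u\<in>U. u i = 1"
  proof -
    fix b i assume b: "b \<in> B" and bi: "b i = 1"
    have "\<exists>j<m. \<exists>S. S \<subseteq> B \<and> b \<in> S \<and> col n A j = (\<lambda>i. \<Sum>x\<in>S. x i)"
    proof (rule ccontr)
      assume H: "\<not> ?thesis"
      have "binary_spanning n m A (B - {b})"
        unfolding binary_spanning_def bspans_set_def bspans_def
      proof (intro conjI ballI)
        show "finite (B - {b})" using finB by simp
        show "\<And>x. x \<in> B - {b} \<Longrightarrow> binvec n x" using bvB by auto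
        fix y assume "y \<in> cols n m A"
        then obtain j where j: "j < m" and y: "y = col n A j" unfolding cols_def by auto
        obtain S where S: "S \<subseteq> B" and eq: "col n A j = (\<lambda>i. \<Sum>x\<in>S. x i)"
          using spB \<open>y \<in> cols n m A\<close> y unfolding bspans_set_def bspans_def by blast
        have "b \<notin> S" using H j S eq by blast
        then show "\<exists>S\<subseteq>B - {b}. y = (\<lambda>i. \<Sum>x\<in>S. x i)" using S eq y by blast
      qed
      then have "card B \<le> card (B - {b})" by (rule minB)
      moreover have "card (B - {b}) < card B" using finB b by (meson card_Diff1_less)
      ultimately show False by simp
    qed
    then obtain j S where j: "j < m" and S: "S \<subseteq> B" and bS: "b \<in> S"
      and eq: "col n A j = (\<lambda>i. \<Sum>x\<in>S. x i)" by blast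
    have finS: "finite S" using finB S finite_subset by auto
    have "b i \<le> (\<Sum>x\<in>S. x i)" using member_le_sum[OF bS, of "\<lambda>x. x i"] finS by simp
    then have ge: "col n A j i \<ge> 1" using fun_cong[OF eq, of i] bi by simp
    have "col n A j \<in> cols n m A" unfolding cols_def using j by auto
    then obtain S' where S': "S' \<subseteq> U" and eq': "col n A j = (\<lambda>i. \<Sum>x\<in>S'. x i)"
      using spU unfolding bspans_set_def bspans_def by blast
    have "(\<Sum>x\<in>S'. x i) \<noteq> 0" using ge fun_cong[OF eq', of i] by simp
    then obtain u where u: "u \<in> S'" and ui: "u i \<noteq> 0" by (meson sum.neutral)
    have iN: "i < n" using bv_lt bvB b bi by auto
    have "u \<in> U" using u S' by auto
    then have "u i \<in> {0,1}" using bvU iN unfolding binvec_def by blast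
    then show "\<exists>u\<in>U. u i = 1" using ui \<open>u \<in> U\<close> by auto
  qed
  show ?thesis unfolding bspans_set_def bspans_def
  proof
    fix b assume b: "b \<in> B"
    define S where "S = {u \<in> U. \<exists>i. b i = 1 \<and> u i = 1}"
    have SU: "S \<subseteq> U" unfolding S_def by auto
    have "b = (\<lambda>i. \<Sum>x\<in>S. x i)"
    proof
      fix i
      show "b i = (\<Sum>x\<in>S. x i)"
      proof (cases "b i = 1")
        case True
        then obtain u where u: "u \<in> U" and ui: "u i = 1" using cover b by blast
        have "u \<in> S" unfolding S_def using u ui True by auto
        then show ?thesis using sum_at_row[OF finU bvU dj SU u ui] True by simp
      next
        case False
        have "\<forall>x\<in>S. x i = 0"
        proof
          fix x assume x: "x \<in> S"
          then obtain i' where bi': "b i' = 1" and xi': "x i' = 1" and xU: "x \<in> U"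
            unfolding S_def by auto
          have "i \<noteq> i'" using False bi' by auto
          then have "x i \<noteq> 1" using unit xU xi' by metis
          moreover have "x i \<in> {0,1}" using bvU xU unfolding binvec_def
            by (cases "i < n") auto
          ultimately show "x i = 0" by auto
        qed
        then have "(\<Sum>x\<in>S. x i) = 0" by (simp add: sum.neutral)
        moreover have "b i = 0"
        proof -
          have "binvec n b" using bvB b by auto
          then show ?thesis using False unfolding binvec_def by (cases "i < n") auto
        qed
        ultimately show ?thesis by simp
      qed
    qed
    then show "\<exists>S\<subseteq>U. b = (\<lambda>i. \<Sum>x\<in>S. x i)" using SU by blast
  qed
qed

end
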